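(* Let $H=(V,E)$ be a hypergraph in which every edge has size exactly $d$. There is an adaptive algorithm that, for every unknown contaminated set $S\in E$, interactively designs a family of at most $O(\log|E|+d\log^2 d)$ tests from whose outcomes $S$ is reliably recovered. Moreover, there exist such instances $H=(V,E)$ (with edges of size $d$) for which every adaptive generalized group testing scheme uses at least $\Omega(\log|E|+d)$ tests.
   Context: For a set $S\subseteq V$ and a test $T\subseteq V$, the outcome $y_{T,S}$ is $1$ if $S\cap T\neq\emptyset$ and $0$ otherwise; $T$ separates $A,B\subseteq V$ if $y_{T,A}\ne y_{T,B}$. In adaptive generalized group testing on $H=(V,E)$, a fixed but unknown contaminated set $S\in E$ is given, and tests $T_1,\dots,T_k\subseteq V$ are chosen sequentially, where the choice of $T_i$ may depend on the outcomes $y_{T_j,S}$ for $j<i$; the outcomes must reliably recover $S$, i.e., for every $A\in E$ with $A\ne S$ some $T_i$ separates $A$ and $S$. The scheme uses at most $k$ tests if for every $S\in E$ the number of tests chosen is at most $k$. The asymptotic notation hides absolute constants. *)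

theory Defs
  imports Complex_Main
begin

text \<open>An adaptive testing scheme is a binary decision tree: each inner node
  holds a test T; the left subtree is followed on outcome 0, the right on outcome 1.\<close>
datatype 'a gtree = Leaf | Test "'a set" "'a gtree" "'a gtree"

definition outcome :: "'a set \<Rightarrow> 'a set \<Rightarrow> bool" where
  "outcome T S \<longleftrightarrow> S \<inter> T \<noteq> {}"

definition separates :: "'a set \<Rightarrow> 'a set \<Rightarrow> 'a set \<Rightarrow> bool" where
  "separates T A B \<longleftrightarrow> outcome T A \<noteq> outcome T B"

fun tests_on :: "'a gtree \<Rightarrow> 'a set \<Rightarrow> 'a set list" where
  "tests_on Leaf S = []"
| "tests_on (Test T l r) S = T # tests_on (if outcome T S then r else l) S"

fun all_tests :: "'a gtree \<Rightarrow> 'a set set" where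
  "all_tests Leaf = {}"
| "all_tests (Test T l r) = insert T (all_tests l \<union> all_tests r)"

definition tests_within :: "'a set \<Rightarrow> 'a gtree \<Rightarrow> bool" where
  "tests_within V t \<longleftrightarrow> (\<forall>T\<in>all_tests t. T \<subseteq> V)"

definition recovers :: "'a set set \<Rightarrow> 'a gtree \<Rightarrow> bool" where
  "recovers E t \<longleftrightarrow>
     (\<forall>S\<in>E. \<forall>A\<in>E. A \<noteq> S \<longrightarrow> (\<exists>T\<in>set (tests_on t S). separates T A S))"

definition uses_at_most :: "'a set set \<Rightarrow> 'a gtree \<Rightarrow> real \<Rightarrow> bool" where
  "uses_at_most E t k \<longleftrightarrow> (\<forall>S\<in>E. real (length (tests_on t S)) \<le> k)"

end

theory Submission
  imports Defs
begin


definition good :: "'a set set \<Rightarrow> 'a gtree \<Rightarrow> bool" where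
  "good F t \<longleftrightarrow> (\<forall>S\<in>F. \<forall>A\<in>F. A \<noteq> S \<longrightarrow> (\<exists>T\<in>set (tests_on t S). separates T A S))"

lemma good_mono: "good F t \<Longrightarrow> G \<subseteq> F \<Longrightarrow> good G t"
  unfolding good_def by blast

lemma good_Leaf: "(\<forall>x\<in>F. \<forall>y\<in>F. x = y) \<Longrightarrow> good F Leaf"
  unfolding good_def by auto

lemma good_LeafD: "good F Leaf \<Longrightarrow> x \<in> F \<Longrightarrow> y \<in> F \<Longrightarrow> x = y"
  unfolding good_def by auto

lemma good_Test:
  assumes "good {S\<in>F. \<not> outcome T S} l" "good {S\<in>F. outcome T S} r"
  shows "good F (Test T l r)"
  unfolding good_def
proof (intro ballI impI)
  fix S A assume S: "S \<in> F" and A: "A \<in> F" and ne: "A \<noteq> S"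
  show "\<exists>T'\<in>set (tests_on (Test T l r) S). separates T' A S"
  proof (cases "outcome T A = outcome T S")
    case True
    show ?thesis
    proof (cases "outcome T S")
      case True
      then have "\<exists>T'\<in>set (tests_on r S). separates T' A S"
        using assms(2) S A ne \<open>outcome T A = outcome T S\<close> unfolding good_def by auto
      then show ?thesis using True by auto
    next
      case False
      then have "\<exists>T'\<in>set (tests_on l S). separates T' A S"
        using assms(1) S A ne \<open>outcome T A = outcome T S\<close> unfolding good_def by auto
      then show ?thesis using False by auto
    qed
  next
    case False
    then show ?thesis by (auto simp: separates_def)
  qed
qed

lemma good_branch:
  assumes "good F (Test T l r)"
  shows "good {S\<in>F. outcome T S} r" "good {S\<in>F. \<not> outcome T S} l"
proof -
  show "good {S\<in>F. outcome T S} r"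
    unfolding good_def
  proof (intro ballI impI)
    fix S A assume S: "S \<in> {S\<in>F. outcome T S}" and A: "A \<in> {S\<in>F. outcome T S}" and ne: "A \<noteq> S"
    then obtain T' where "T' \<in> set (tests_on (Test T l r) S)" "separates T' A S"
      using assms unfolding good_def by blast
    then show "\<exists>T'\<in>set (tests_on r S). separates T' A S"
      using S A by (auto simp: separates_def)
  qed
  show "good {S\<in>F. \<not> outcome T S} l"
    unfolding good_def
  proof (intro ballI impI)
    fix S A assume S: "S \<in> {S\<in>F. \<not> outcome T S}" and A: "A \<in> {S\<in>F. \<not> outcome T S}" and ne: "A \<noteq> S"
    then obtain T' where "T' \<in> set (tests_on (Test T l r) S)" "separates T' A S"
      using assms unfolding good_def by blast
    then show "\<exists>T'\<in>set (tests_on l S). separates T' A S"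
      using S A by (auto simp: separates_def)
  qed
qed

lemma card_split: "finite F \<Longrightarrow> card {S\<in>F. P S} + card {S\<in>F. \<not> P S} = card F"
proof -
  assume f: "finite F"
  have "F = {S\<in>F. P S} \<union> {S\<in>F. \<not> P S}" by auto
  moreover have "card ({S\<in>F. P S} \<union> {S\<in>F. \<not> P S}) = card {S\<in>F. P S} + card {S\<in>F. \<not> P S}"
    by (rule card_Un_disjoint) (use f in auto)
  ultimately show ?thesis by simp
qed

lemma info_lb: "finite F \<Longrightarrow> good F t \<Longrightarrow> F \<noteq> {} \<Longrightarrow> \<exists>S\<in>F. card F \<le> 2 ^ length (tests_on t S)"
proof (induction t arbitrary: F)
  case Leaf
  have "\<forall>x\<in>F. \<forall>y\<in>F. x = y" using good_LeafD Leaf.prems(2) by blast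
  then have "card F \<le> Suc 0" using card_le_Suc0_iff_eq[OF Leaf.prems(1)] by blast
  then show ?case using Leaf by auto
next
  case (Test T l r)
  have cs: "card {S\<in>F. outcome T S} + card {S\<in>F. \<not> outcome T S} = card F"
    using card_split Test.prems(1) by blast
  have cF: "card F > 0" using Test.prems by auto
  show ?case
  proof (cases "card F \<le> 2 * card {S\<in>F. outcome T S}")
    case True
    have "{S\<in>F. outcome T S} \<noteq> {}"
    proof
      assume "{S\<in>F. outcome T S} = {}"
      then have "card {S\<in>F. outcome T S} = 0" by (metis card.empty)
      then show False using True cF by linarith
    qed
    then obtain S where S: "S \<in> {S\<in>F. outcome T S}" "card {S\<in>F. outcome T S} \<le> 2 ^ length (tests_on r S)"
      using Test.IH(2)[of "{S\<in>F. outcome T S}"] good_branch(1)[OF Test.prems(2)] Test.prems(1) by auto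
    then have "length (tests_on (Test T l r) S) = Suc (length (tests_on r S))" by simp
    then show ?thesis using S True by (intro bexI[of _ S]) auto
  next
    case False
    then have F2: "card F \<le> 2 * card {S\<in>F. \<not> outcome T S}" using cs by linarith
    have "{S\<in>F. \<not> outcome T S} \<noteq> {}"
    proof
      assume "{S\<in>F. \<not> outcome T S} = {}"
      then have "card {S\<in>F. \<not> outcome T S} = 0" by (metis card.empty)
      then show False using F2 cF by linarith
    qed
    then obtain S where S: "S \<in> {S\<in>F. \<not> outcome T S}" "card {S\<in>F. \<not> outcome T S} \<le> 2 ^ length (tests_on l S)"
      using Test.IH(1)[of "{S\<in>F. \<not> outcome T S}"] good_branch(2)[OF Test.prems(2)] Test.prems(1) by auto
    then have "length (tests_on (Test T l r) S) = Suc (length (tests_on l S))" by simp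
    then show ?thesis using S F2 by (intro bexI[of _ S]) auto
  qed
qed

lemma prop_mono:
  assumes "\<forall>T. \<exists>b. \<forall>A\<in>F. \<forall>A'\<in>F. outcome T A \<noteq> b \<longrightarrow> outcome T A' \<noteq> b \<longrightarrow> A = A'"
    "G \<subseteq> F"
  shows "\<forall>T. \<exists>b. \<forall>A\<in>G. \<forall>A'\<in>G. outcome T A \<noteq> b \<longrightarrow> outcome T A' \<noteq> b \<longrightarrow> A = A'"
proof
  fix T
  obtain b where b: "\<forall>A\<in>F. \<forall>A'\<in>F. outcome T A \<noteq> b \<longrightarrow> outcome T A' \<noteq> b \<longrightarrow> A = A'"
    using spec[OF assms(1), of T] by (rule exE)
  show "\<exists>b. \<forall>A\<in>G. \<forall>A'\<in>G. outcome T A \<noteq> b \<longrightarrow> outcome T A' \<noteq> b \<longrightarrow> A = A'"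
  proof (intro exI[of _ b] ballI impI)
    fix A A' assume "A \<in> G" "A' \<in> G" "outcome T A \<noteq> b" "outcome T A' \<noteq> b"
    then show "A = A'" using b assms(2) by (meson subsetD)
  qed
qed
lemma sun_lb: "finite F \<Longrightarrow> good F t \<Longrightarrow> F \<noteq> {} \<Longrightarrow>
  (\<forall>T. \<exists>b. \<forall>A\<in>F. \<forall>A'\<in>F. outcome T A \<noteq> b \<longrightarrow> outcome T A' \<noteq> b \<longrightarrow> A = A') \<Longrightarrow>
  \<exists>S\<in>F. card F \<le> Suc (length (tests_on t S))"
proof (induction t arbitrary: F)
  case Leaf
  have "\<forall>x\<in>F. \<forall>y\<in>F. x = y" using good_LeafD Leaf.prems(2) by blast
  then have "card F \<le> Suc 0" using card_le_Suc0_iff_eq[OF Leaf.prems(1)] by blast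
  then show ?case using Leaf by auto
next
  case (Test T l r)
  obtain b where b: "\<forall>A\<in>F. \<forall>A'\<in>F. outcome T A \<noteq> b \<longrightarrow> outcome T A' \<noteq> b \<longrightarrow> A = A'"
    using spec[OF Test.prems(4), of T] by (rule exE)
  define F' where "F' = {S\<in>F. outcome T S = b}"
  have cs: "card F' + card {S\<in>F. \<not> outcome T S = b} = card F"
    unfolding F'_def using card_split[OF Test.prems(1), of "\<lambda>S. outcome T S = b"] by simp
  have "\<forall>x\<in>{S\<in>F. \<not> outcome T S = b}. \<forall>y\<in>{S\<in>F. \<not> outcome T S = b}. x = y"
    using b by (simp (no_asm_simp))
  then have "card {S\<in>F. \<not> outcome T S = b} \<le> 1"
    using card_le_Suc0_iff_eq[of "{S\<in>F. \<not> outcome T S = b}"] Test.prems(1) by simp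
  then have c1: "card F \<le> Suc (card F')" using cs by linarith
  show ?case
  proof (cases "F' = {}")
    case True
    then have "card F \<le> 1" using c1 by simp
    then show ?thesis using Test.prems(3) by auto
  next
    case False
    have g: "good F' (if b then r else l)"
      using good_branch[OF Test.prems(2)] unfolding F'_def by (cases b) auto
    have p: "\<forall>T. \<exists>b. \<forall>A\<in>F'. \<forall>A'\<in>F'. outcome T A \<noteq> b \<longrightarrow> outcome T A' \<noteq> b \<longrightarrow> A = A'"
      using prop_mono[OF Test.prems(4), of F'] unfolding F'_def by blast
    have fin: "finite F'" using Test.prems(1) unfolding F'_def by auto
    obtain S where S: "S \<in> F'" "card F' \<le> Suc (length (tests_on (if b then r else l) S))"
    proof (cases b)
      case True
      then show ?thesis using Test.IH(2)[OF fin _ False p] g that by auto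
    next
      case False
      then show ?thesis using Test.IH(1)[OF fin _ \<open>F' \<noteq> {}\<close> p] g that by auto
    qed
    have "outcome T S = b" using S(1) unfolding F'_def by auto
    then have "length (tests_on (Test T l r) S) = Suc (length (tests_on (if b then r else l) S))"
      by simp
    then show ?thesis using S c1 unfolding F'_def by (intro bexI[of _ S]) auto
  qed
qed



lemma log_step:
  fixes a n :: nat
  assumes "0 < a" "2 * a ^ 3 \<le> n ^ 3"
  shows "1 + 3 * log 2 (real a) \<le> 3 * log 2 (real n)"
proof -
  have n: "0 < n" using assms by (metis gr0I le_zero_eq mult_pos_pos nat_zero_less_power_iff pos2 power_0_left zero_less_numeral)
  have "real (2 * a ^ 3) \<le> real (n ^ 3)" using assms(2) by linarith
  then have r: "2 * real a ^ 3 \<le> real n ^ 3" by simp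
  have "log 2 (2 * real a ^ 3) \<le> log 2 (real n ^ 3)"
    using r assms(1) n by (subst log_le_cancel_iff) auto
  moreover have "log 2 (2 * real a ^ 3) = 1 + 3 * log 2 (real a)"
    using assms(1) by (simp add: log_mult log_nat_power)
  moreover have "log 2 (real n ^ 3) = 3 * log 2 (real n)"
    using n by (simp add: log_nat_power)
  ultimately show ?thesis by linarith
qed

lemma split_exists:
  fixes F :: "'a set set" and W :: "'a set"
  assumes "finite W" "\<forall>w\<in>W. 2 * card {S\<in>F. w \<in> S} \<le> card F"
    "4 * card {S\<in>F. S \<inter> W = {}} \<le> 3 * card F" "finite F"
  shows "\<exists>T\<subseteq>W. card F \<le> 4 * card {S\<in>F. S \<inter> T = {}} \<and> 4 * card {S\<in>F. S \<inter> T = {}} \<le> 3 * card F"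
  using assms(1-3)
proof (induction W rule: finite_induct)
  case empty
  then have "card F = 0" by simp
  then show ?case by auto
next
  case (insert w W)
  show ?case
  proof (cases "4 * card {S\<in>F. S \<inter> W = {}} \<le> 3 * card F")
    case True
    then show ?thesis using insert by blast
  next
    case False
    have "{S\<in>F. S \<inter> W = {}} \<subseteq> {S\<in>F. S \<inter> insert w W = {}} \<union> {S\<in>F. w \<in> S}" by auto
    then have "card {S\<in>F. S \<inter> W = {}} \<le> card ({S\<in>F. S \<inter> insert w W = {}} \<union> {S\<in>F. w \<in> S})"
      using assms(4) by (intro card_mono) auto
    also have "\<dots> \<le> card {S\<in>F. S \<inter> insert w W = {}} + card {S\<in>F. w \<in> S}" by (rule card_Un_le)
    finally have "card {S\<in>F. S \<inter> W = {}} \<le> card {S\<in>F. S \<inter> insert w W = {}} + card {S\<in>F. w \<in> S}" .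
    moreover have "2 * card {S\<in>F. w \<in> S} \<le> card F" using insert.prems by auto
    ultimately show ?thesis using False insert.prems(2) by (intro exI[of _ "insert w W"]) auto
  qed
qed

lemma inter_card_mono:
  assumes "finite V" "F \<subseteq> Pow V" "F' \<subseteq> F" "F' \<noteq> {}"
  shows "card (\<Inter>F) \<le> card (\<Inter>F')" "finite (\<Inter>F')"
proof -
  show f: "finite (\<Inter>F')"
    using assms by (meson Inf_lower2 PowD equals0I finite_subset subset_iff)
  show "card (\<Inter>F) \<le> card (\<Inter>F')"
    using assms f by (intro card_mono) auto
qed



lemma main:
  fixes V :: "'a set"
  assumes V: "finite V"
  shows "F \<subseteq> Pow V \<Longrightarrow> (\<forall>e\<in>F. card e = d) \<Longrightarrow> F \<noteq> {} \<Longrightarrow>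
    \<exists>t. tests_within V t \<and> good F t \<and>
      (\<forall>S\<in>F. real (length (tests_on t S)) \<le> 3 * log 2 (real (card F)) + real d - real (card (\<Inter>F)))"
proof (induction "card F" arbitrary: F rule: less_induct)
  case less
  have finF: "finite F" using less.prems(1) V by (meson finite_Pow_iff finite_subset)
  have cF: "card F \<ge> 1" using finF less.prems(3) by (simp add: Suc_leI card_gt_0_iff)
  have fin_sub: "\<And>S. S \<in> F \<Longrightarrow> finite S \<and> S \<subseteq> V" using less.prems(1) V by (meson PowD finite_subset subsetD)
  show ?case
  proof (cases "card F = 1")
    case True
    then obtain S0 where F: "F = {S0}" by (meson card_1_singletonE)
    have "card S0 = d" using less.prems(2) F by auto
    then show ?thesis using F
      by (intro exI[of _ Leaf]) (auto simp: tests_within_def good_def)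
  next
    case False
    then have c2: "card F \<ge> 2" using cF by linarith
    show ?thesis
    proof (cases "\<exists>v. v \<notin> \<Inter>F \<and> card F < 2 * card {S\<in>F. v \<in> S}")
      case True
      then obtain v where v: "v \<notin> \<Inter>F" "card F < 2 * card {S\<in>F. v \<in> S}" by blast
      define F1 where "F1 = {S\<in>F. \<not> v \<in> S}"
      define F2 where "F2 = {S\<in>F. v \<in> S}"
      have cs: "card F2 + card F1 = card F" unfolding F1_def F2_def using card_split[OF finF, of "\<lambda>S. v \<in> S"] by simp
      have F1ne: "F1 \<noteq> {}" using v(1) unfolding F1_def by auto
      have F2ne: "F2 \<noteq> {}" using v(2) unfolding F2_def by (metis card.empty mult_0_right not_less0)
      have "finite F1" "finite F2" unfolding F1_def F2_def using finF by simp_all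
      then have c1pos: "card F1 > 0" and c2pos: "card F2 > 0" using F1ne F2ne card_gt_0_iff by blast+
      have lt1: "card F1 < card F" using cs c2pos by linarith
      have lt2: "card F2 < card F" using cs c1pos by linarith
      have sub1: "F1 \<subseteq> Pow V" using less.prems(1) unfolding F1_def by blast
      have cd1: "\<forall>e\<in>F1. card e = d" using less.prems(2) unfolding F1_def by blast
      obtain t1 where t1: "tests_within V t1" "good F1 t1"
        "\<forall>S\<in>F1. real (length (tests_on t1 S)) \<le> 3 * log 2 (real (card F1)) + real d - real (card (\<Inter>F1))"
        using less.hyps[OF lt1 sub1 cd1 F1ne] by blast
      have sub2: "F2 \<subseteq> Pow V" using less.prems(1) unfolding F2_def by blast
      have cd2: "\<forall>e\<in>F2. card e = d" using less.prems(2) unfolding F2_def by blast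
      obtain t2 where t2: "tests_within V t2" "good F2 t2"
        "\<forall>S\<in>F2. real (length (tests_on t2 S)) \<le> 3 * log 2 (real (card F2)) + real d - real (card (\<Inter>F2))"
        using less.hyps[OF lt2 sub2 cd2 F2ne] by blast
      have oc: "\<And>S. outcome {v} S \<longleftrightarrow> v \<in> S" by (auto simp: outcome_def)
      have vV: "v \<in> V" using F2ne fin_sub unfolding F2_def by auto
      have tw: "tests_within V (Test {v} t1 t2)" using t1(1) t2(1) vV by (auto simp: tests_within_def)
      have gd: "good F (Test {v} t1 t2)"
        by (rule good_Test) (use t1(2) t2(2) in \<open>simp_all add: oc F1_def F2_def\<close>)
      have i1: "card (\<Inter>F) \<le> card (\<Inter>F1)"
        using inter_card_mono[OF V less.prems(1) _ F1ne] unfolding F1_def by auto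
      have fi2: "finite (\<Inter>F2)"
        using inter_card_mono[OF V less.prems(1) _ F2ne] unfolding F2_def by auto
      have vin: "v \<in> \<Inter>F2" unfolding F2_def by blast
      have IF: "\<Inter>F \<subseteq> \<Inter>F2" unfolding F2_def by (rule Inter_anti_mono) blast
      have ins: "insert v (\<Inter>F) \<subseteq> \<Inter>F2" using vin IF by (rule insert_subsetI)
      have fiF: "finite (\<Inter>F)" using finite_subset[OF IF fi2] .
      have "card (insert v (\<Inter>F)) \<le> card (\<Inter>F2)" using card_mono[OF fi2 ins] .
      moreover have "card (insert v (\<Inter>F)) = card (\<Inter>F) + 1" using card_insert_disjoint[OF fiF v(1)] by simp
      ultimately have i2: "card (\<Inter>F) + 1 \<le> card (\<Inter>F2)" by linarith
      have l1: "1 + 3 * log 2 (real (card F1)) \<le> 3 * log 2 (real (card F))"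
      proof (rule log_step[OF c1pos])
        have "2 * card F1 < card F" using cs v(2) unfolding F2_def by linarith
        then have "(2 * card F1) ^ 3 \<le> card F ^ 3" by (intro power_mono) auto
        then show "2 * card F1 ^ 3 \<le> card F ^ 3" by (simp add: power_mult_distrib)
      qed
      have l2: "log 2 (real (card F2)) \<le> log 2 (real (card F))"
        using lt2 c2pos by (subst log_le_cancel_iff) auto
      show ?thesis
      proof (intro exI[of _ "Test {v} t1 t2"] conjI tw gd ballI)
        fix S assume S: "S \<in> F"
        show "real (length (tests_on (Test {v} t1 t2) S)) \<le> 3 * log 2 (real (card F)) + real d - real (card (\<Inter>F))"
        proof (cases "v \<in> S")
          case True
          then have "S \<in> F2" using S unfolding F2_def by auto
          then have "real (length (tests_on t2 S)) \<le> 3 * log 2 (real (card F2)) + real d - real (card (\<Inter>F2))"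
            using t2(3) by auto
          moreover have "tests_on (Test {v} t1 t2) S = {v} # tests_on t2 S" using True oc by simp
          ultimately show ?thesis using l2 i2 by simp
        next
          case False
          then have "S \<in> F1" using S unfolding F1_def by auto
          then have "real (length (tests_on t1 S)) \<le> 3 * log 2 (real (card F1)) + real d - real (card (\<Inter>F1))"
            using t1(3) by auto
          moreover have "tests_on (Test {v} t1 t2) S = {v} # tests_on t1 S" using False oc by simp
          ultimately show ?thesis using l1 i1 by simp
        qed
      qed
    next
      case False
      then have freq: "\<forall>w\<in>\<Union>F - \<Inter>F. 2 * card {S\<in>F. w \<in> S} \<le> card F" by (auto simp: not_less)
      have finW: "finite (\<Union>F - \<Inter>F)" using finF fin_sub by auto
      have "{S\<in>F. S \<inter> (\<Union>F - \<Inter>F) = {}} \<subseteq> {\<Inter>F}"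
      proof
        fix S assume "S \<in> {S\<in>F. S \<inter> (\<Union>F - \<Inter>F) = {}}"
        then have S: "S \<in> F" "S \<inter> (\<Union>F - \<Inter>F) = {}" by auto
        have "S \<subseteq> \<Inter>F" using S by blast
        moreover have "\<Inter>F \<subseteq> S" using S(1) by blast
        ultimately show "S \<in> {\<Inter>F}" by blast
      qed
      then have "card {S\<in>F. S \<inter> (\<Union>F - \<Inter>F) = {}} \<le> card {\<Inter>F}"
        by (rule card_mono[rotated]) simp
      then have "card {S\<in>F. S \<inter> (\<Union>F - \<Inter>F) = {}} \<le> 1" by simp
      then have "4 * card {S\<in>F. S \<inter> (\<Union>F - \<Inter>F) = {}} \<le> 3 * card F" using c2 by linarith
      then obtain T where T: "T \<subseteq> \<Union>F - \<Inter>F" "card F \<le> 4 * card {S\<in>F. S \<inter> T = {}}"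
        "4 * card {S\<in>F. S \<inter> T = {}} \<le> 3 * card F"
        using split_exists[OF finW freq _ finF] by blast
      define F1 where "F1 = {S\<in>F. \<not> S \<inter> T \<noteq> {}}"
      define F2 where "F2 = {S\<in>F. S \<inter> T \<noteq> {}}"
      have F1eq: "F1 = {S\<in>F. S \<inter> T = {}}" unfolding F1_def by auto
      have cs: "card F2 + card F1 = card F" unfolding F1_def F2_def using card_split[OF finF, of "\<lambda>S. S \<inter> T \<noteq> {}"] by simp
      have cF1: "card F1 = card {S\<in>F. S \<inter> T = {}}" using F1eq by simp
      have c1pos: "card F1 > 0" using T(2) c2 cF1 by linarith
      have c2pos: "card F2 > 0" using T(3) c2 cF1 cs by linarith
      have q1: "4 * card F1 \<le> 3 * card F" using T(3) cF1 by linarith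
      have q2: "4 * card F2 \<le> 3 * card F" using T(2) cF1 cs by linarith
      have F1ne: "F1 \<noteq> {}" using c1pos by auto
      have F2ne: "F2 \<noteq> {}" using c2pos by auto
      have lt1: "card F1 < card F" using cs c2pos by linarith
      have lt2: "card F2 < card F" using cs c1pos by linarith
      have sub1: "F1 \<subseteq> Pow V" using less.prems(1) unfolding F1_def by blast
      have cd1: "\<forall>e\<in>F1. card e = d" using less.prems(2) unfolding F1_def by blast
      obtain t1 where t1: "tests_within V t1" "good F1 t1"
        "\<forall>S\<in>F1. real (length (tests_on t1 S)) \<le> 3 * log 2 (real (card F1)) + real d - real (card (\<Inter>F1))"
        using less.hyps[OF lt1 sub1 cd1 F1ne] by blast
      have sub2: "F2 \<subseteq> Pow V" using less.prems(1) unfolding F2_def by blast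
      have cd2: "\<forall>e\<in>F2. card e = d" using less.prems(2) unfolding F2_def by blast
      obtain t2 where t2: "tests_within V t2" "good F2 t2"
        "\<forall>S\<in>F2. real (length (tests_on t2 S)) \<le> 3 * log 2 (real (card F2)) + real d - real (card (\<Inter>F2))"
        using less.hyps[OF lt2 sub2 cd2 F2ne] by blast
      have oc: "\<And>S. outcome T S \<longleftrightarrow> S \<inter> T \<noteq> {}" by (auto simp: outcome_def)
      have TV: "T \<subseteq> V" using T(1) fin_sub by auto
      have tw: "tests_within V (Test T t1 t2)" using t1(1) t2(1) TV by (auto simp: tests_within_def)
      have gd: "good F (Test T t1 t2)"
        by (rule good_Test) (use t1(2) t2(2) in \<open>simp_all add: oc F1_def F2_def\<close>)
      have i1: "card (\<Inter>F) \<le> card (\<Inter>F1)"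
        using inter_card_mono[OF V less.prems(1) _ F1ne] unfolding F1_def by auto
      have i2: "card (\<Inter>F) \<le> card (\<Inter>F2)"
        using inter_card_mono[OF V less.prems(1) _ F2ne] unfolding F2_def by auto
      have cube: "\<And>a. 4 * a \<le> 3 * card F \<Longrightarrow> 2 * a ^ 3 \<le> card F ^ 3"
      proof -
        fix a :: nat assume "4 * a \<le> 3 * card F"
        then have "(4 * a) ^ 3 \<le> (3 * card F) ^ 3" by (intro power_mono) auto
        then have "64 * a ^ 3 \<le> 27 * card F ^ 3" by (simp add: power_mult_distrib)
        then show "2 * a ^ 3 \<le> card F ^ 3" by linarith
      qed
      have l1: "1 + 3 * log 2 (real (card F1)) \<le> 3 * log 2 (real (card F))"
        using log_step[OF c1pos cube[OF q1]] .
      have l2: "1 + 3 * log 2 (real (card F2)) \<le> 3 * log 2 (real (card F))"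
        using log_step[OF c2pos cube[OF q2]] .
      show ?thesis
      proof (intro exI[of _ "Test T t1 t2"] conjI tw gd ballI)
        fix S assume S: "S \<in> F"
        show "real (length (tests_on (Test T t1 t2) S)) \<le> 3 * log 2 (real (card F)) + real d - real (card (\<Inter>F))"
        proof (cases "S \<inter> T \<noteq> {}")
          case True
          then have "S \<in> F2" using S unfolding F2_def by auto
          then have "real (length (tests_on t2 S)) \<le> 3 * log 2 (real (card F2)) + real d - real (card (\<Inter>F2))"
            using t2(3) by auto
          moreover have "tests_on (Test T t1 t2) S = T # tests_on t2 S" using True oc by simp
          ultimately show ?thesis using l2 i2 by simp
        next
          case False
          then have "S \<in> F1" using S unfolding F1_def by auto
          then have "real (length (tests_on t1 S)) \<le> 3 * log 2 (real (card F1)) + real d - real (card (\<Inter>F1))"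
            using t1(3) by auto
          moreover have "tests_on (Test T t1 t2) S = T # tests_on t1 S" using False oc by simp
          ultimately show ?thesis using l1 i1 by simp
        qed
      qed
    qed
  qed
qed



lemma part1_bound:
  fixes n d cI :: nat and x :: real
  assumes "n \<ge> 1" "n = 1 \<Longrightarrow> cI = d" "x \<le> 3 * log 2 (real n) + real d - real cI"
  shows "x \<le> 4 * (log 2 (real n) + real d * (log 2 (real d))^2)"
proof -
  have L0: "log 2 (real n) \<ge> 0" using assms(1) by simp
  have D0: "real d * (log 2 (real d))^2 \<ge> 0" by simp
  have C0: "real cI \<ge> 0" "real d \<ge> 0" by simp_all
  show ?thesis
  proof (cases "n = 1")
    case True
    then have "x \<le> 0" using assms(2,3) by simp
    moreover have "log 2 (real n) = 0" using True by simp
    ultimately show ?thesis using D0 by (smt (verit))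
  next
    case False
    then have "real n \<ge> 2" using assms(1) by simp
    then have L1: "log 2 (real n) \<ge> 1" by simp
    show ?thesis
    proof (cases "d \<le> 1")
      case True
      then have "real d \<le> 1" by simp
      then show ?thesis using assms(3) L1 D0 C0 by (smt (verit))
    next
      case False
      then have "real d \<ge> 2" by simp
      then have ld: "log 2 (real d) \<ge> 1" by simp
      then have "(log 2 (real d))^2 \<ge> 1" by (simp add: one_le_power)
      then have "real d * (log 2 (real d))^2 \<ge> real d * 1" by (intro mult_left_mono) auto
      then show ?thesis using assms(3) L0 C0 by (smt (verit))
    qed
  qed
qed

lemma recovers_good: "recovers E t \<longleftrightarrow> good E t"
  unfolding recovers_def good_def by simp

lemma part1:
  fixes V :: "nat set"
  assumes V: "finite V" and E: "E \<subseteq> Pow V" and cd: "\<forall>e\<in>E. card e = d"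
  shows "\<exists>t. tests_within V t \<and> recovers E t \<and>
                 uses_at_most E t (4 * (log 2 (real (card E)) + real d * (log 2 (real d))^2))"
proof (cases "E = {}")
  case True
  then show ?thesis
    by (intro exI[of _ Leaf]) (simp add: tests_within_def recovers_def uses_at_most_def)
next
  case False
  have finE: "finite E" using E V by (meson finite_Pow_iff finite_subset)
  then have n1: "card E \<ge> 1" using False by (simp add: Suc_leI card_gt_0_iff)
  have cI: "card E = 1 \<Longrightarrow> card (\<Inter>E) = d"
  proof -
    assume "card E = 1"
    then obtain S0 where "E = {S0}" by (meson card_1_singletonE)
    then show "card (\<Inter>E) = d" using cd by simp
  qed
  obtain t where t: "tests_within V t" "good E t"
    "\<forall>S\<in>E. real (length (tests_on t S)) \<le> 3 * log 2 (real (card E)) + real d - real (card (\<Inter>E))"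
    using main[OF V E cd False] by blast
  show ?thesis
  proof (intro exI[of _ t] conjI)
    show "tests_within V t" by (rule t(1))
    show "recovers E t" using t(2) recovers_good by blast
    show "uses_at_most E t (4 * (log 2 (real (card E)) + real d * (log 2 (real d))^2))"
      unfolding uses_at_most_def
    proof
      fix S assume "S \<in> E"
      then show "real (length (tests_on t S)) \<le> 4 * (log 2 (real (card E)) + real d * (log 2 (real d))^2)"
        using part1_bound[OF n1 cI] t(3) by blast
    qed
  qed
qed

lemma E1_prop:
  fixes U :: "nat set"
  shows "\<forall>T. \<exists>b. \<forall>A\<in>(\<lambda>i. U - {i}) ` U. \<forall>A'\<in>(\<lambda>i. U - {i}) ` U.
           outcome T A \<noteq> b \<longrightarrow> outcome T A' \<noteq> b \<longrightarrow> A = A'"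
proof
  fix T
  show "\<exists>b. \<forall>A\<in>(\<lambda>i. U - {i}) ` U. \<forall>A'\<in>(\<lambda>i. U - {i}) ` U.
           outcome T A \<noteq> b \<longrightarrow> outcome T A' \<noteq> b \<longrightarrow> A = A'"
  proof (cases "T \<inter> U = {}")
    case True
    show ?thesis
    proof (intro exI[of _ False] ballI impI)
      fix A A' assume "A \<in> (\<lambda>i. U - {i}) ` U" "outcome T A \<noteq> False"
      then show "A = A'" using True by (auto simp: outcome_def)
    qed
  next
    case False
    then obtain a where a: "a \<in> T" "a \<in> U" by blast
    show ?thesis
    proof (intro exI[of _ True] ballI impI)
      fix A A' assume A: "A \<in> (\<lambda>i. U - {i}) ` U" and A': "A' \<in> (\<lambda>i. U - {i}) ` U"
        and o1: "outcome T A \<noteq> True" and o2: "outcome T A' \<noteq> True"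
      obtain i where i: "i \<in> U" "A = U - {i}" using A by blast
      obtain j where j: "j \<in> U" "A' = U - {j}" using A' by blast
      have "(U - {i}) \<inter> T = {}" using o1 i by (simp add: outcome_def)
      then have "a = i" using a by blast
      have "(U - {j}) \<inter> T = {}" using o2 j by (simp add: outcome_def)
      then have "a = j" using a by blast
      show "A = A'" using i j \<open>a = i\<close> \<open>a = j\<close> by simp
    qed
  qed
qed

lemma part2:
  fixes d N :: nat
  assumes d1: "d \<ge> 1"
  shows "\<exists>(V::nat set) E.
            finite V \<and> E \<subseteq> Pow V \<and> (\<forall>e\<in>E. card e = d) \<and> card E \<ge> N \<and>
            (\<forall>t. tests_within V t \<longrightarrow> recovers E t \<longrightarrow>
                 (\<exists>S\<in>E. real (length (tests_on t S)) \<ge> 1/2 * (log 2 (real (card E)) + real d)))"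
proof -
  define U :: "nat set" where "U = {0..d}"
  define V :: "nat set" where "V = {0..<d+1+N}"
  define E where "E = {e. e \<subseteq> V \<and> card e = d}"
  define E1 where "E1 = (\<lambda>i. U - {i}) ` U"
  define E2 where "E2 = (\<lambda>j. insert j {1..<d}) ` {d+1..<d+1+N}"
  have finV: "finite V" unfolding V_def by simp
  have EP: "E \<subseteq> Pow V" unfolding E_def by blast
  have finE: "finite E" using finite_subset[OF EP] finV by simp
  have cdE: "\<forall>e\<in>E. card e = d" unfolding E_def by blast
  have UV: "U \<subseteq> V" unfolding U_def V_def by auto
  have E1E: "E1 \<subseteq> E"
  proof
    fix A assume "A \<in> E1"
    then obtain i where i: "i \<in> U" "A = U - {i}" unfolding E1_def by blast
    have "card (U - {i}) = d" using i(1) unfolding U_def by simp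
    moreover have "U - {i} \<subseteq> V" using UV by blast
    ultimately show "A \<in> E" unfolding E_def using i(2) by blast
  qed
  have injU: "inj_on (\<lambda>i. U - {i}) U"
  proof (rule inj_onI)
    fix x y assume "x \<in> U" "y \<in> U" "U - {x} = U - {y}"
    then show "x = y" by blast
  qed
  have cE1: "card E1 = d + 1" unfolding E1_def using card_image[OF injU] unfolding U_def by simp
  have E2E: "E2 \<subseteq> E"
  proof
    fix A assume "A \<in> E2"
    then obtain j where j: "j \<in> {d+1..<d+1+N}" "A = insert j {1..<d}" unfolding E2_def by blast
    have "j \<notin> {1..<d}" using j(1) by simp
    then have "card (insert j {1..<d}) = Suc (card {1..<d})" by simp
    then have "card (insert j {1..<d}) = d" using d1 by simp
    moreover have "insert j {1..<d} \<subseteq> V" using j(1) unfolding V_def by auto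
    ultimately show "A \<in> E" unfolding E_def using j(2) by blast
  qed
  have injJ: "inj_on (\<lambda>j. insert j {1..<d}) {d+1..<d+1+N}"
  proof (rule inj_onI)
    fix x y assume x: "x \<in> {d+1..<d+1+N}" and y: "y \<in> {d+1..<d+1+N}"
      and e: "insert x {1..<d} = insert y {1..<d}"
    have "x \<in> insert y {1..<d}" using e by blast
    then show "x = y" using x by simp
  qed
  have cE2: "card E2 = N" unfolding E2_def using card_image[OF injJ] by simp
  have NE: "N \<le> card E" using card_mono[OF finE E2E] cE2 by simp
  have E1ne: "E1 \<noteq> {}" using cE1 by auto
  have Ene: "E \<noteq> {}" using E1E E1ne by blast
  have finE1: "finite E1" using finite_subset[OF E1E finE] .
  show ?thesis
  proof (intro exI[of _ V] exI[of _ E] conjI allI impI finV EP cdE NE)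
    fix t assume tw: "tests_within V t" and rc: "recovers E t"
    have g: "good E t" using rc recovers_good by blast
    obtain S1 where S1: "S1 \<in> E" "card E \<le> 2 ^ length (tests_on t S1)"
      using info_lb[OF finE g Ene] by blast
    obtain S2 where S2: "S2 \<in> E1" "card E1 \<le> Suc (length (tests_on t S2))"
      using sun_lb[OF finE1 good_mono[OF g E1E] E1ne] E1_prop[of U] unfolding E1_def by blast
    have l2: "real d \<le> real (length (tests_on t S2))" using S2(2) cE1 by simp
    have "real (card E) \<le> 2 ^ length (tests_on t S1)"
      using S1(2) by (metis of_nat_le_iff of_nat_numeral of_nat_power)
    moreover have "real (card E) > 0" using finE Ene by (simp add: card_gt_0_iff)
    ultimately have "log 2 (real (card E)) \<le> log 2 (2 ^ length (tests_on t S1))"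
      by (subst log_le_cancel_iff) auto
    then have l1: "log 2 (real (card E)) \<le> real (length (tests_on t S1))" by simp
    show "\<exists>S\<in>E. real (length (tests_on t S)) \<ge> 1/2 * (log 2 (real (card E)) + real d)"
    proof (cases "length (tests_on t S1) \<ge> length (tests_on t S2)")
      case True
      then have "real (length (tests_on t S1)) \<ge> real (length (tests_on t S2))" by simp
      then show ?thesis using S1(1) l1 l2 by (intro bexI[of _ S1]) auto
    next
      case False
      then have "real (length (tests_on t S1)) \<le> real (length (tests_on t S2))" by simp
      then show ?thesis using S2(1) E1E l1 l2 by (intro bexI[of _ S2]) auto
    qed
  qed
qed


theorem theorem4:
  shows "(\<exists>C>0. \<forall>(V::nat set) E (d::nat).
            finite V \<longrightarrow> E \<subseteq> Pow V \<longrightarrow> (\<forall>e\<in>E. card e = d) \<longrightarrow>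
            (\<exists>t. tests_within V t \<and> recovers E t \<and>
                 uses_at_most E t (C * (log 2 (real (card E)) + real d * (log 2 (real d))^2))))
       \<and> (\<exists>c>0. \<forall>(d::nat)\<ge>1. \<forall>N::nat. \<exists>(V::nat set) E.
            finite V \<and> E \<subseteq> Pow V \<and> (\<forall>e\<in>E. card e = d) \<and> card E \<ge> N \<and>
            (\<forall>t. tests_within V t \<longrightarrow> recovers E t \<longrightarrow>
                 (\<exists>S\<in>E. real (length (tests_on t S)) \<ge> c * (log 2 (real (card E)) + real d))))"
  proof (rule conjI)
  show "\<exists>C>0. \<forall>(V::nat set) E (d::nat).
            finite V \<longrightarrow> E \<subseteq> Pow V \<longrightarrow> (\<forall>e\<in>E. card e = d) \<longrightarrow>
            (\<exists>t. tests_within V t \<and> recovers E t \<and>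
                 uses_at_most E t (C * (log 2 (real (card E)) + real d * (log 2 (real d))^2)))"
  proof (intro exI[of _ "4::real"] conjI allI impI)
    fix V :: "nat set" and E and d :: nat
    assume "finite V" "E \<subseteq> Pow V" "\<forall>e\<in>E. card e = d"
    then show "\<exists>t. tests_within V t \<and> recovers E t \<and>
                 uses_at_most E t (4 * (log 2 (real (card E)) + real d * (log 2 (real d))^2))"
      by (rule part1)
  qed simp
  show "\<exists>c>0. \<forall>(d::nat)\<ge>1. \<forall>N::nat. \<exists>(V::nat set) E.
            finite V \<and> E \<subseteq> Pow V \<and> (\<forall>e\<in>E. card e = d) \<and> card E \<ge> N \<and>
            (\<forall>t. tests_within V t \<longrightarrow> recovers E t \<longrightarrow>
                 (\<exists>S\<in>E. real (length (tests_on t S)) \<ge> c * (log 2 (real (card E)) + real d)))"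
  proof (intro exI[of _ "1/2::real"] conjI allI impI)
    fix d N :: nat
    assume "d \<ge> 1"
    then show "\<exists>(V::nat set) E.
            finite V \<and> E \<subseteq> Pow V \<and> (\<forall>e\<in>E. card e = d) \<and> card E \<ge> N \<and>
            (\<forall>t. tests_within V t \<longrightarrow> recovers E t \<longrightarrow>
                 (\<exists>S\<in>E. real (length (tests_on t S)) \<ge> 1/2 * (log 2 (real (card E)) + real d)))"
      by (rule part2)
  qed simp
qed

end
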